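(* For finite abstract simplicial complexes $G,H$, let $g=L_{G\times H}^{-1}$. Then $\sum_{X,Y\in G\times H}g(X,Y)=\chi(G\times H)$, where $\chi(G\times H)=\sum_{(x,y)\in G\times H}(-1)^{\dim(x)+\dim(y)}=\chi(G)\chi(H)$.
   Context: A finite abstract simplicial complex is a finite set of nonempty finite sets closed under taking nonempty subsets; $\dim(x)=|x|-1$ and $\chi(G)=\sum_{x\in G}(-1)^{\dim(x)}$. The connection matrix $L_G$ is indexed by elements of $G$, $L_G(x,y)=1$ if $x\cap y\neq\emptyset$, else $0$; it is known to be invertible (indeed unimodular). $G\times H$ is the set of pairs $(x,y)$, $x\in G$, $y\in H$, with connection matrix $L_{G\times H}((x,y),(a,b))=1$ if $x\cap a\ne\emptyset$ and $y\cap b\neq\emptyset$, else $0$; it equals the Kronecker product $L_G\otimes L_H$ and hence is invertible. *)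

theory Defs
  imports Complex_Main
begin

definition simplicial_complex :: "'a set set \<Rightarrow> bool" where
  "simplicial_complex G \<longleftrightarrow> finite G \<and> (\<forall>x\<in>G. finite x \<and> x \<noteq> {}) \<and>
     (\<forall>x\<in>G. \<forall>y. y \<subseteq> x \<and> y \<noteq> {} \<longrightarrow> y \<in> G)"

text \<open>dim x = |x| - 1 (elements of a complex are nonempty, so no truncation occurs)\<close>
definition sdim :: "'a set \<Rightarrow> nat" where
  "sdim x = card x - 1"

definition euler_char :: "'a set set \<Rightarrow> int" where
  "euler_char G = (\<Sum>x\<in>G. (-1) ^ sdim x)"

definition euler_char_prod :: "'a set set \<Rightarrow> 'b set set \<Rightarrow> int" where
  "euler_char_prod G H = (\<Sum>(x, y)\<in>G \<times> H. (-1) ^ (sdim x + sdim y))"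

definition connection_prod :: "('a set \<times> 'b set) \<Rightarrow> ('a set \<times> 'b set) \<Rightarrow> real" where
  "connection_prod X Y = (if fst X \<inter> fst Y \<noteq> {} \<and> snd X \<inter> snd Y \<noteq> {} then 1 else 0)"

definition is_inverse_on :: "'i set \<Rightarrow> ('i \<Rightarrow> 'i \<Rightarrow> real) \<Rightarrow> ('i \<Rightarrow> 'i \<Rightarrow> real) \<Rightarrow> bool" where
  "is_inverse_on S L g \<longleftrightarrow>
     (\<forall>X\<in>S. \<forall>Y\<in>S. (\<Sum>Z\<in>S. L X Z * g Z Y) = (if X = Y then 1 else 0)) \<and>
     (\<forall>X\<in>S. \<forall>Y\<in>S. (\<Sum>Z\<in>S. g X Z * L Z Y) = (if X = Y then 1 else 0))"

end

theory Submission imports Defs begin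

lemma altsum:
  assumes "finite z"
  shows "(\<Sum>y\<in>Pow z. (-1::real) ^ card y) = (if z = {} then 1 else 0)"
proof -
  have "(\<Prod>x\<in>z. (1::real) - 1) = (\<Sum>X\<in>Pow z. (-1) ^ card X * (\<Prod>x\<in>X. 1) * (\<Prod>x\<in>z-X. 1))"
    by (rule prod_diff_conv_sum[OF assms])
  then show ?thesis using assms by (cases "z = {}") (auto simp: power_0_left)
qed

definition wc :: "'a set set \<Rightarrow> 'a set \<Rightarrow> real" where
  "wc G y = (\<Sum>z\<in>G. if y \<subseteq> z then (-1) ^ card z * (-1) ^ card y else 0)"

lemma wc_L:
  assumes sc: "simplicial_complex G" and x: "x \<in> G"
  shows "(\<Sum>y\<in>G. (if x \<inter> y \<noteq> {} then 1 else 0) * wc G y) = 1"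
proof -
  have fin: "finite G" and fz: "\<And>z. z \<in> G \<Longrightarrow> finite z \<and> z \<noteq> {}"
    and cl: "\<And>z y. z \<in> G \<Longrightarrow> y \<subseteq> z \<Longrightarrow> y \<noteq> {} \<Longrightarrow> y \<in> G"
    using sc unfolding simplicial_complex_def by blast+
  have "(\<Sum>y\<in>G. (if x \<inter> y \<noteq> {} then 1 else 0) * wc G y)
      = (\<Sum>y\<in>G. \<Sum>z\<in>G. if x \<inter> y \<noteq> {} \<and> y \<subseteq> z then (-1) ^ card z * (-1) ^ card y else 0)"
    unfolding wc_def by (auto simp: sum_distrib_left intro!: sum.cong)
  also have "\<dots> = (\<Sum>z\<in>G. \<Sum>y\<in>G. if x \<inter> y \<noteq> {} \<and> y \<subseteq> z then (-1) ^ card z * (-1) ^ card y else 0)"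
    by (rule sum.swap)
  also have "\<dots> = (\<Sum>z\<in>G. (-1) ^ card z * (\<Sum>y\<in>{y\<in>Pow z. x \<inter> y \<noteq> {}}. (-1) ^ card y))"
  proof (rule sum.cong[OF refl])
    fix z assume z: "z \<in> G"
    have "(\<Sum>y\<in>G. if x \<inter> y \<noteq> {} \<and> y \<subseteq> z then (-1) ^ card z * (-1::real) ^ card y else 0)
        = (\<Sum>y\<in>{y\<in>G. x \<inter> y \<noteq> {} \<and> y \<subseteq> z}. (-1) ^ card z * (-1) ^ card y)"
      using fin by (simp add: sum.inter_filter)
    also have "{y\<in>G. x \<inter> y \<noteq> {} \<and> y \<subseteq> z} = {y\<in>Pow z. x \<inter> y \<noteq> {}}"
      using cl[OF z] fz[OF z] by auto
    finally show "(\<Sum>y\<in>G. if x \<inter> y \<noteq> {} \<and> y \<subseteq> z then (-1) ^ card z * (-1::real) ^ card y else 0)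
        = (-1) ^ card z * (\<Sum>y\<in>{y\<in>Pow z. x \<inter> y \<noteq> {}}. (-1) ^ card y)"
      by (simp add: sum_distrib_left)
  qed
  also have "\<dots> = (\<Sum>z\<in>G. if z \<subseteq> x then - ((-1) ^ card z) else 0)"
  proof (rule sum.cong[OF refl])
    fix z assume z: "z \<in> G"
    have fz': "finite z" "z \<noteq> {}" using fz[OF z] by auto
    have split: "Pow z = {y\<in>Pow z. x \<inter> y \<noteq> {}} \<union> Pow (z - x)" by auto
    have "(\<Sum>y\<in>Pow z. (-1::real) ^ card y) = (\<Sum>y\<in>{y\<in>Pow z. x \<inter> y \<noteq> {}}. (-1) ^ card y) + (\<Sum>y\<in>Pow (z - x). (-1) ^ card y)"
      by (subst split, rule sum.union_disjoint) (use fz' in auto)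
    hence "(\<Sum>y\<in>{y\<in>Pow z. x \<inter> y \<noteq> {}}. (-1::real) ^ card y) = - (if z - x = {} then 1 else 0)"
      using altsum[of z] altsum[of "z - x"] fz' by simp
    then show "(-1) ^ card z * (\<Sum>y\<in>{y\<in>Pow z. x \<inter> y \<noteq> {}}. (-1::real) ^ card y) = (if z \<subseteq> x then - ((-1) ^ card z) else 0)"
      by auto
  qed
  also have "\<dots> = (\<Sum>z\<in>{z\<in>G. z \<subseteq> x}. - ((-1::real) ^ card z))"
    using fin by (simp add: sum.inter_filter)
  also have "{z\<in>G. z \<subseteq> x} = Pow x - {{}}"
    using cl[OF x] fz by auto
  also have "(\<Sum>z\<in>Pow x - {{}}. - ((-1::real) ^ card z)) = - ((\<Sum>z\<in>Pow x. (-1::real) ^ card z) - 1)"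
    using fz[OF x] by (simp add: sum_diff1 sum_negf)
  also have "\<dots> = 1" using altsum[of x] fz[OF x] by simp
  finally show ?thesis .
qed

lemma wc_sum:
  assumes sc: "simplicial_complex G"
  shows "(\<Sum>y\<in>G. wc G y) = real_of_int (euler_char G)"
proof -
  have fin: "finite G" and fz: "\<And>z. z \<in> G \<Longrightarrow> finite z \<and> z \<noteq> {}"
    and cl: "\<And>z y. z \<in> G \<Longrightarrow> y \<subseteq> z \<Longrightarrow> y \<noteq> {} \<Longrightarrow> y \<in> G"
    using sc unfolding simplicial_complex_def by blast+
  have "(\<Sum>y\<in>G. wc G y) = (\<Sum>z\<in>G. \<Sum>y\<in>G. if y \<subseteq> z then (-1) ^ card z * (-1) ^ card y else 0)"
    unfolding wc_def by (rule sum.swap)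
  also have "\<dots> = (\<Sum>z\<in>G. (-1::real) ^ sdim z)"
  proof (rule sum.cong[OF refl])
    fix z assume z: "z \<in> G"
    have fz': "finite z" "z \<noteq> {}" using fz[OF z] by auto
    have "(\<Sum>y\<in>G. if y \<subseteq> z then (-1) ^ card z * (-1::real) ^ card y else 0)
        = (\<Sum>y\<in>{y\<in>G. y \<subseteq> z}. (-1) ^ card z * (-1) ^ card y)"
      using fin by (simp add: sum.inter_filter)
    also have "{y\<in>G. y \<subseteq> z} = Pow z - {{}}" using cl[OF z] fz by auto
    also have "(\<Sum>y\<in>Pow z - {{}}. (-1) ^ card z * (-1::real) ^ card y) = (-1) ^ card z * ((\<Sum>y\<in>Pow z. (-1) ^ card y) - 1)"
      using fz' by (simp add: sum_diff1 sum_distrib_left[symmetric])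
    also have "\<dots> = - ((-1) ^ card z)" using altsum[of z] fz' by simp
    also have "\<dots> = (-1::real) ^ sdim z"
    proof -
      have "card z \<ge> 1" using fz' by (simp add: Suc_le_eq card_gt_0_iff)
      then have "card z = Suc (sdim z)" unfolding sdim_def by simp
      then show ?thesis by simp
    qed
    finally show "(\<Sum>y\<in>G. if y \<subseteq> z then (-1) ^ card z * (-1::real) ^ card y else 0) = (-1) ^ sdim z" .
  qed
  also have "\<dots> = real_of_int (euler_char G)" unfolding euler_char_def by simp
  finally show ?thesis .
qed

theorem mainTheorem14:
  fixes G :: "'a set set" and H :: "'b set set"
    and g :: "('a set \<times> 'b set) \<Rightarrow> ('a set \<times> 'b set) \<Rightarrow> real"
  assumes "simplicial_complex G" and "simplicial_complex H"
    and "is_inverse_on (G \<times> H) connection_prod g"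
  shows "(\<Sum>X\<in>G \<times> H. \<Sum>Y\<in>G \<times> H. g X Y) = real_of_int (euler_char_prod G H)
     \<and> euler_char_prod G H = euler_char G * euler_char H"
proof -
  let ?S = "G \<times> H"
  define w where "w X = wc G (fst X) * wc H (snd X)" for X :: "'a set \<times> 'b set"
  have finG: "finite G" and finH: "finite H" using assms(1,2) unfolding simplicial_complex_def by auto
  have ep: "euler_char_prod G H = euler_char G * euler_char H"
    unfolding euler_char_prod_def euler_char_def
    by (simp add: sum.cartesian_product[symmetric] sum_product power_add)
  have Lw: "(\<Sum>Z\<in>?S. connection_prod Y Z * w Z) = 1" if Y: "Y \<in> ?S" for Y
  proof -
    obtain a b where ab: "Y = (a, b)" "a \<in> G" "b \<in> H" using Y by auto
    have "(\<Sum>Z\<in>?S. connection_prod Y Z * w Z)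
       = (\<Sum>x\<in>G. \<Sum>y\<in>H. ((if a \<inter> x \<noteq> {} then 1 else 0) * wc G x) * ((if b \<inter> y \<noteq> {} then 1 else 0) * wc H y))"
      unfolding sum.cartesian_product ab(1)
    proof (rule sum.cong[OF refl])
      fix Z assume "Z \<in> G \<times> H"
      obtain x y where Z: "Z = (x, y)" by (cases Z)
      show "connection_prod (a, b) Z * w Z = (case Z of (x, y) \<Rightarrow> ((if a \<inter> x \<noteq> {} then 1 else 0) * wc G x) * ((if b \<inter> y \<noteq> {} then 1 else 0) * wc H y))"
        unfolding Z connection_prod_def w_def by (cases "a \<inter> x = {}"; cases "b \<inter> y = {}") simp_all
    qed
    also have "\<dots> = (\<Sum>x\<in>G. (if a \<inter> x \<noteq> {} then 1 else 0) * wc G x) * (\<Sum>y\<in>H. (if b \<inter> y \<noteq> {} then 1 else 0) * wc H y)"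
      by (simp add: sum_product)
    also have "\<dots> = 1" using wc_L[OF assms(1) ab(2)] wc_L[OF assms(2) ab(3)] by simp
    finally show ?thesis .
  qed
  have inv: "\<And>X Y. X \<in> ?S \<Longrightarrow> Y \<in> ?S \<Longrightarrow> (\<Sum>Z\<in>?S. g X Z * connection_prod Z Y) = (if X = Y then 1 else 0)"
    using assms(3) unfolding is_inverse_on_def by blast
  have finS: "finite ?S" using finG finH by simp
  have "(\<Sum>X\<in>?S. \<Sum>Y\<in>?S. g X Y) = (\<Sum>X\<in>?S. \<Sum>Y\<in>?S. g X Y * (\<Sum>Z\<in>?S. connection_prod Y Z * w Z))"
    using Lw by simp
  also have "\<dots> = (\<Sum>X\<in>?S. \<Sum>Z\<in>?S. (\<Sum>Y\<in>?S. g X Y * connection_prod Y Z) * w Z)"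
  proof (rule sum.cong[OF refl])
    fix X
    have "(\<Sum>Y\<in>?S. g X Y * (\<Sum>Z\<in>?S. connection_prod Y Z * w Z)) = (\<Sum>Y\<in>?S. \<Sum>Z\<in>?S. g X Y * connection_prod Y Z * w Z)"
      by (simp add: sum_distrib_left mult.assoc)
    also have "\<dots> = (\<Sum>Z\<in>?S. \<Sum>Y\<in>?S. g X Y * connection_prod Y Z * w Z)"
      by (rule sum.swap)
    also have "\<dots> = (\<Sum>Z\<in>?S. (\<Sum>Y\<in>?S. g X Y * connection_prod Y Z) * w Z)"
      by (simp add: sum_distrib_right)
    finally show "(\<Sum>Y\<in>?S. g X Y * (\<Sum>Z\<in>?S. connection_prod Y Z * w Z)) = (\<Sum>Z\<in>?S. (\<Sum>Y\<in>?S. g X Y * connection_prod Y Z) * w Z)" .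
  qed
  also have "\<dots> = (\<Sum>X\<in>?S. \<Sum>Z\<in>?S. (if X = Z then w Z else 0))"
    by (intro sum.cong refl) (simp add: inv)
  also have "\<dots> = (\<Sum>X\<in>?S. w X)" using finS by simp
  also have "\<dots> = (\<Sum>x\<in>G. wc G x) * (\<Sum>y\<in>H. wc H y)"
    unfolding w_def sum_product sum.cartesian_product by (simp add: case_prod_beta)
  also have "\<dots> = real_of_int (euler_char_prod G H)"
    using wc_sum[OF assms(1)] wc_sum[OF assms(2)] ep by simp
  finally show ?thesis using ep by simp
qed

end
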